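(* Let $a>0$, $b>0$ and consider the equation $u_t+ax^2u_{xx}+bx^3u_{xx}^2=0$ for $t>0$, $x>0$. Let $c_1,c_2$ be arbitrary real constants and $\varepsilon,\delta\in\{1,-1\}$. Each of the following functions is an exact solution: (1) $u=c_1+\frac{a}{2b}x\left(c_2+\frac a2t-\log x\right)$; (2) $u=c_1-t+4\delta\sqrt{\frac xb}+\frac{a}{2b}x\left(c_2+\frac a2t-\log x\right)$; (3) $u=c_1+\frac{a+2\varepsilon}{2b}x\left(c_2+\frac{a-2\varepsilon}{2}t-\log x\right)$; (4) $u=\varepsilon c_1^2e^{-\varepsilon t}+4\delta c_1e^{-\frac{\varepsilon}{2}t}\sqrt{\frac xb}+\frac{a+2\varepsilon}{2b}x\left(c_2+\frac{a-2\varepsilon}{2}t-\log x\right)$; (5) $u=\frac xb\left[c_1+\left(\varepsilon+\frac{a^2}{4}\right)t-\frac a2\log x+\frac{1}{2k}\left(\delta\sqrt{1-4\varepsilon k^2}-1\right)\left(\frac1k t+\log x\right)\right]$, where $k\neq0$ if $\varepsilon=-1$, and $0<|k|\le\frac12$ if $\varepsilon=1$.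
   Context: This is the non-linear Black--Scholes equation $u_t+ax^2u_{xx}+bx^3u_{xx}^2+c(xu_x-u)=0$ with $c=0$; $\log$ denotes the natural logarithm. *)

theory Defs
  imports "HOL-Analysis.Analysis"
begin

definition BS_solution :: "real \<Rightarrow> real \<Rightarrow> (real \<Rightarrow> real \<Rightarrow> real) \<Rightarrow> bool" where
  "BS_solution a b u \<longleftrightarrow>
     (\<forall>t>0. \<forall>x>0.
        (\<lambda>s. u s x) differentiable (at t) \<and>
        (\<lambda>y. u t y) differentiable (at x) \<and>
        deriv (\<lambda>y. u t y) differentiable (at x) \<and>
        deriv (\<lambda>s. u s x) t + a * x\<^sup>2 * deriv (deriv (\<lambda>y. u t y)) x
          + b * x ^ 3 * (deriv (deriv (\<lambda>y. u t y)) x)\<^sup>2 = 0)"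

end

theory Submission
  imports Defs
begin

lemma sq1:
  assumes "0 < f x" "(f has_real_derivative D) (at x)" "E = D/(2 * sqrt (f x))"
  shows "((\<lambda>y. sqrt(f y)) has_real_derivative E) (at x)"
proof -
  have "(sqrt has_real_derivative inverse (sqrt (f x)) / 2) (at (f x))"
    using assms(1) by (rule DERIV_real_sqrt)
  from DERIV_chain2[OF this assms(2)] show ?thesis
    using assms(3) by (simp add: field_simps)
qed

lemma BS_intro:
  assumes T: "\<And>t x. t > 0 \<Longrightarrow> x > 0 \<Longrightarrow> ((\<lambda>s. u s x) has_real_derivative Ut t x) (at t)"
    and X: "\<And>t x. t > 0 \<Longrightarrow> x > 0 \<Longrightarrow> ((\<lambda>y. u t y) has_real_derivative Ux t x) (at x)"
    and XX: "\<And>t x. t > 0 \<Longrightarrow> x > 0 \<Longrightarrow> ((\<lambda>y. Ux t y) has_real_derivative Uxx t x) (at x)"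
    and E: "\<And>t x. t > 0 \<Longrightarrow> x > 0 \<Longrightarrow> Ut t x + a*x\<^sup>2*Uxx t x + b*x^3*(Uxx t x)\<^sup>2 = 0"
  shows "BS_solution a b u"
  unfolding BS_solution_def
proof (intro allI impI)
  fix t x :: real assume t: "t > 0" and x: "x > 0"
  have d1: "deriv (\<lambda>s. u s x) t = Ut t x" using T[OF t x] by (rule DERIV_imp_deriv)
  have d2: "deriv (\<lambda>y. u t y) y = Ux t y" if "y \<in> {0<..}" for y
    using X[OF t] that by (intro DERIV_imp_deriv) auto
  have h: "(deriv (\<lambda>y. u t y) has_real_derivative Uxx t x) (at x)"
    by (rule has_field_derivative_transform_within_open[OF XX[OF t x], of "{0<..}"])
       (use x d2 in auto)
  have d3: "deriv (deriv (\<lambda>y. u t y)) x = Uxx t x" using h by (rule DERIV_imp_deriv)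
  show "(\<lambda>s. u s x) differentiable (at t) \<and>
        (\<lambda>y. u t y) differentiable (at x) \<and>
        deriv (\<lambda>y. u t y) differentiable (at x) \<and>
        deriv (\<lambda>s. u s x) t + a * x\<^sup>2 * deriv (deriv (\<lambda>y. u t y)) x
          + b * x ^ 3 * (deriv (deriv (\<lambda>y. u t y)) x)\<^sup>2 = 0"
    using T[OF t x] X[OF t x] h E[OF t x] d1 d3
    by (auto simp: real_differentiable_def)
qed


lemma s1:
  assumes "a > 0" "b > 0"
  shows "BS_solution a b (\<lambda>t x. c1 + a / (2*b) * x * (c2 + a/2 * t - ln x))"
  apply (rule BS_intro[where Ut="\<lambda>t x. a/(2*b)*x*(a/2)"
       and Ux="\<lambda>t x. a/(2*b)*(c2 + a/2*t - ln x) - a/(2*b)"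
       and Uxx="\<lambda>t x. - a/(2*b)/x"])
  subgoal using assms by (auto intro!: derivative_eq_intros simp: field_simps)
  subgoal for t x apply (rule derivative_eq_intros refl | simp)+ using assms apply (simp add: field_simps)? done
  subgoal for t x apply (rule derivative_eq_intros refl | simp)+ using assms apply (simp add: field_simps)? done
  subgoal using assms by (simp add: field_simps power2_eq_square power3_eq_cube)
  done

lemma s3:
  assumes "a > 0" "b > 0"
  shows "BS_solution a b (\<lambda>t x. c1 + (a + 2*\<epsilon>) / (2*b) * x * (c2 + (a - 2*\<epsilon>)/2 * t - ln x))"
  apply (rule BS_intro[where Ut="\<lambda>t x. (a + 2*\<epsilon>)/(2*b)*x*((a - 2*\<epsilon>)/2)"
       and Ux="\<lambda>t x. (a + 2*\<epsilon>)/(2*b)*(c2 + (a - 2*\<epsilon>)/2*t - ln x) - (a + 2*\<epsilon>)/(2*b)"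
       and Uxx="\<lambda>t x. - (a + 2*\<epsilon>)/(2*b)/x"])
  subgoal using assms by (auto intro!: derivative_eq_intros simp: field_simps)
  subgoal for t x apply (rule derivative_eq_intros refl | simp)+ using assms apply (simp add: field_simps)? done
  subgoal for t x apply (rule derivative_eq_intros refl | simp)+ using assms apply (simp add: field_simps)? done
  subgoal using assms by (simp add: field_simps power2_eq_square power3_eq_cube)
  done


lemma dx1:
  fixes x b \<beta> q K B c :: real
  shows "x > 0 \<Longrightarrow> b > 0 \<Longrightarrow> \<beta> = sqrt b \<Longrightarrow> ((\<lambda>y. q + K * sqrt (y / b) + B * y * (c - ln y)) has_real_derivative
           K / (2 * \<beta> * sqrt x) + B * (c - ln x) - B) (at x)"
  apply (rule sq1 derivative_eq_intros refl | simp)+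
  apply (simp add: field_simps real_sqrt_divide)
  done

lemma dx2:
  fixes x \<beta> K B c :: real
  shows "x > 0 \<Longrightarrow> \<beta> > 0 \<Longrightarrow> ((\<lambda>y. K / (2 * \<beta> * sqrt y) + B * (c - ln y) - B) has_real_derivative
           - K / (4 * \<beta> * x * sqrt x) - B / x) (at x)"
  apply (rule sq1 derivative_eq_intros refl | simp)+
  done

lemma alg2:
  fixes r \<beta> :: real
  assumes "r > 0" "\<beta> > 0" "\<delta>*\<delta> = 1"
  shows "-1 + a/(2*(\<beta>*\<beta>))*(r*r)*(a/2) + a*(r*r)\<^sup>2*(- (4*\<delta>)/(4 * \<beta> * (r*r) * r) - a/(2*(\<beta>*\<beta>))/(r*r))
     + (\<beta>*\<beta>)*(r*r)^3*(- (4*\<delta>)/(4 * \<beta> * (r*r) * r) - a/(2*(\<beta>*\<beta>))/(r*r))\<^sup>2 = 0"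
  using assms by (simp add: field_simps power2_eq_square power3_eq_cube)

lemma s2:
  assumes "a > 0" "b > 0" "\<delta> \<in> {1, -1}"
  shows "BS_solution a b (\<lambda>t x. c1 - t + 4 * \<delta> * sqrt (x / b)
                               + a / (2*b) * x * (c2 + a/2 * t - ln x))"
proof -
  obtain \<beta> where be: "\<beta> = sqrt b" by blast
  have sb: "b = \<beta> * \<beta>" using assms be by simp
  have sbp: "\<beta> > 0" using assms be by simp
  have dd: "\<delta>*\<delta> = 1" using assms by auto
  show ?thesis
  apply (rule BS_intro[where Ut="\<lambda>t x. -1 + a/(2*b)*x*(a/2)"
       and Ux="\<lambda>t x. (4*\<delta>) / (2 * \<beta> * sqrt x) + a/(2*b)*(c2 + a/2*t - ln x) - a/(2*b)"
       and Uxx="\<lambda>t x. - (4*\<delta>) / (4 * \<beta> * x * sqrt x) - a/(2*b)/x"])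
  subgoal using assms by (auto intro!: derivative_eq_intros simp: field_simps)
  subgoal for t x by (rule dx1[OF _ assms(2) be, of x "c1 - t" "4*\<delta>" "a/(2*b)" "c2 + a/2*t"]) simp
  subgoal for t x by (rule dx2[OF _ sbp, of x "4*\<delta>" "a/(2*b)" "c2 + a/2*t"]) simp
  subgoal for t x using alg2[of "sqrt x" \<beta> \<delta> a] sbp dd unfolding sb by simp
  done
qed

lemma alg4:
  fixes r \<beta> e :: real
  assumes "r > 0" "\<beta> > 0" "\<delta> = 1 \<or> \<delta> = -1" "\<epsilon> = 1 \<or> \<epsilon> = -1"
  shows "\<epsilon> * c1\<^sup>2 * (e*e) * (-\<epsilon>) + 4 * \<delta> * c1 * e * (-(\<epsilon>/2)) * (r/\<beta>) + (a + 2*\<epsilon>)/(2*(\<beta>*\<beta>))*(r*r)*((a - 2*\<epsilon>)/2)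
     + a*(r*r)\<^sup>2*(- (4*\<delta>*c1*e)/(4 * \<beta> * (r*r) * r) - (a + 2*\<epsilon>)/(2*(\<beta>*\<beta>))/(r*r))
     + (\<beta>*\<beta>)*(r*r)^3*(- (4*\<delta>*c1*e)/(4 * \<beta> * (r*r) * r) - (a + 2*\<epsilon>)/(2*(\<beta>*\<beta>))/(r*r))\<^sup>2 = 0"
  using assms(3,4) apply (elim disjE)
  using assms(1,2) by (simp_all add: field_simps power2_eq_square power3_eq_cube)

lemma s4:
  assumes "a > 0" "b > 0" "\<delta> \<in> {1, -1}" "\<epsilon> \<in> {1, -1}"
  shows "BS_solution a b (\<lambda>t x. \<epsilon> * c1\<^sup>2 * exp (- \<epsilon> * t)
                               + 4 * \<delta> * c1 * exp (- (\<epsilon>/2) * t) * sqrt (x / b)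
                               + (a + 2*\<epsilon>) / (2*b) * x * (c2 + (a - 2*\<epsilon>)/2 * t - ln x))"
proof -
  obtain \<beta> where be: "\<beta> = sqrt b" by blast
  have sb: "b = \<beta> * \<beta>" using assms be by simp
  have sbp: "\<beta> > 0" using assms be by simp
  have ex: "exp (- \<epsilon> * t) = exp (- (\<epsilon>/2) * t) * exp (- (\<epsilon>/2) * t)" for t
    by (simp flip: exp_add)
  show ?thesis
  apply (rule BS_intro[where Ut="\<lambda>t x. \<epsilon> * c1\<^sup>2 * exp (- \<epsilon> * t) * (-\<epsilon>) + 4 * \<delta> * c1 * exp (- (\<epsilon>/2) * t) * (-(\<epsilon>/2)) * sqrt (x / b) + (a + 2*\<epsilon>)/(2*b)*x*((a - 2*\<epsilon>)/2)"
       and Ux="\<lambda>t x. (4*\<delta>*c1*exp (- (\<epsilon>/2) * t)) / (2 * \<beta> * sqrt x) + (a + 2*\<epsilon>)/(2*b)*(c2 + (a - 2*\<epsilon>)/2*t - ln x) - (a + 2*\<epsilon>)/(2*b)"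
       and Uxx="\<lambda>t x. - (4*\<delta>*c1*exp (- (\<epsilon>/2) * t)) / (4 * \<beta> * x * sqrt x) - (a + 2*\<epsilon>)/(2*b)/x"])
  subgoal by (rule derivative_eq_intros refl)+ (simp add: algebra_simps)
  subgoal for t x by (rule dx1[OF _ assms(2) be, of x "\<epsilon> * c1\<^sup>2 * exp (- \<epsilon> * t)" "4*\<delta>*c1*exp (- (\<epsilon>/2) * t)" "(a + 2*\<epsilon>)/(2*b)" "c2 + (a - 2*\<epsilon>)/2*t"]) simp
  subgoal for t x by (rule dx2[OF _ sbp, of x "4*\<delta>*c1*exp (- (\<epsilon>/2) * t)" "(a + 2*\<epsilon>)/(2*b)" "c2 + (a - 2*\<epsilon>)/2*t"]) simp
  subgoal for t x using alg4[of "sqrt x" \<beta> \<delta> \<epsilon> c1 "exp (- (\<epsilon>/2) * t)" a] sbp assms(3,4) unfolding sb ex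
    by (simp add: real_sqrt_divide)
  done
qed

lemma key5:
  fixes k \<epsilon> \<delta> :: real
  assumes "k \<noteq> 0" "1 - 4*\<epsilon>*k\<^sup>2 \<ge> 0" "\<delta> = 1 \<or> \<delta> = -1"
  shows "\<epsilon> + (1/(2*k) * (\<delta> * sqrt (1 - 4*\<epsilon>*k\<^sup>2) - 1))/k + (1/(2*k) * (\<delta> * sqrt (1 - 4*\<epsilon>*k\<^sup>2) - 1))\<^sup>2 = 0"
proof -
  define s where "s = sqrt (1 - 4*\<epsilon>*k\<^sup>2)"
  have ss: "s * s = 1 - 4*\<epsilon>*k\<^sup>2" unfolding s_def using assms(2) by simp
  have e: "\<epsilon> = (1 - s * s)/(4*k\<^sup>2)" using ss assms(1) by (simp add: field_simps)
  show ?thesis unfolding s_def[symmetric] unfolding e using assms(1,3)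
    by (elim disjE) (simp_all add: field_simps power2_eq_square)
qed

lemma s5:
  assumes "a > 0" "b > 0" "\<delta> \<in> {1, -1}" "k \<noteq> 0" "1 - 4*\<epsilon>*k\<^sup>2 \<ge> 0"
  shows "BS_solution a b (\<lambda>t x. x / b * (c1 + (\<epsilon> + a\<^sup>2/4) * t - a/2 * ln x
                + 1/(2*k) * (\<delta> * sqrt (1 - 4*\<epsilon>*k\<^sup>2) - 1) * (1/k * t + ln x)))"
proof -
  define K where "K = 1/(2*k) * (\<delta> * sqrt (1 - 4*\<epsilon>*k\<^sup>2) - 1)"
  have kk: "\<epsilon> + K/k + K\<^sup>2 = 0" unfolding K_def using key5[OF assms(4,5)] assms(3) by simp
  have bnz: "b \<noteq> 0" using assms by simp
  show ?thesis
  unfolding K_def[symmetric]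
  apply (rule BS_intro[where Ut="\<lambda>t x. x/b*(\<epsilon> + a\<^sup>2/4 + K/k)"
       and Ux="\<lambda>t x. 1/b*(c1 + (\<epsilon> + a\<^sup>2/4) * t - a/2 * ln x + K * (1/k * t + ln x)) + (K - a/2)/b"
       and Uxx="\<lambda>t x. (K - a/2)/(b*x)"])
  subgoal apply (rule derivative_eq_intros refl)+ using assms by (simp add: field_simps)
  subgoal for t x apply (rule derivative_eq_intros refl | simp add: bnz)+ using assms apply (simp add: field_simps)? done
  subgoal for t x apply (rule derivative_eq_intros refl | simp add: bnz)+ using assms apply (simp add: field_simps)? done
  subgoal for t x
  proof -
    assume x: "0 < t" "0 < x"
    have "x / b * (\<epsilon> + a\<^sup>2 / 4 + K / k) + a * x\<^sup>2 * ((K - a / 2) / (b * x)) +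
      b * x ^ 3 * ((K - a / 2) / (b * x))\<^sup>2 = x / b * (\<epsilon> + K/k + K\<^sup>2)"
      using assms x by (simp add: field_simps power2_eq_square power3_eq_cube)
    then show ?thesis using kk by simp
  qed
  done
qed

theorem mainTheorem5:
  fixes a b c1 c2 \<epsilon> \<delta> k :: real
  assumes "a > 0" and "b > 0"
    and "\<epsilon> \<in> {1, -1}" and "\<delta> \<in> {1, -1}"
  shows "BS_solution a b (\<lambda>t x. c1 + a / (2*b) * x * (c2 + a/2 * t - ln x)) \<and>
        BS_solution a b (\<lambda>t x. c1 - t + 4 * \<delta> * sqrt (x / b)
                               + a / (2*b) * x * (c2 + a/2 * t - ln x)) \<and>
        BS_solution a b (\<lambda>t x. c1 + (a + 2*\<epsilon>) / (2*b) * x * (c2 + (a - 2*\<epsilon>)/2 * t - ln x)) \<and>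
        BS_solution a b (\<lambda>t x. \<epsilon> * c1\<^sup>2 * exp (- \<epsilon> * t)
                               + 4 * \<delta> * c1 * exp (- (\<epsilon>/2) * t) * sqrt (x / b)
                               + (a + 2*\<epsilon>) / (2*b) * x * (c2 + (a - 2*\<epsilon>)/2 * t - ln x)) \<and>
         ((\<epsilon> = -1 \<and> k \<noteq> 0) \<or> (\<epsilon> = 1 \<and> 0 < \<bar>k\<bar> \<and> \<bar>k\<bar> \<le> 1/2) \<longrightarrow>
         BS_solution a b (\<lambda>t x. x / b * (c1 + (\<epsilon> + a\<^sup>2/4) * t - a/2 * ln x
                + 1/(2*k) * (\<delta> * sqrt (1 - 4*\<epsilon>*k\<^sup>2) - 1) * (1/k * t + ln x))))"
proof (intro conjI impI)
  show "BS_solution a b (\<lambda>t x. c1 + a / (2*b) * x * (c2 + a/2 * t - ln x))"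
    using s1 assms(1,2) .
  show "BS_solution a b (\<lambda>t x. c1 - t + 4 * \<delta> * sqrt (x / b)
                               + a / (2*b) * x * (c2 + a/2 * t - ln x))"
    using s2 assms(1,2,4) .
  show "BS_solution a b (\<lambda>t x. c1 + (a + 2*\<epsilon>) / (2*b) * x * (c2 + (a - 2*\<epsilon>)/2 * t - ln x))"
    using s3 assms(1,2) .
  show "BS_solution a b (\<lambda>t x. \<epsilon> * c1\<^sup>2 * exp (- \<epsilon> * t)
                               + 4 * \<delta> * c1 * exp (- (\<epsilon>/2) * t) * sqrt (x / b)
                               + (a + 2*\<epsilon>) / (2*b) * x * (c2 + (a - 2*\<epsilon>)/2 * t - ln x))"
    using s4 assms(1,2,4,3) .
  assume h: "(\<epsilon> = -1 \<and> k \<noteq> 0) \<or> (\<epsilon> = 1 \<and> 0 < \<bar>k\<bar> \<and> \<bar>k\<bar> \<le> 1/2)"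
  have k0: "k \<noteq> 0" using h by auto
  have nn: "1 - 4*\<epsilon>*k\<^sup>2 \<ge> 0"
    using h
  proof
    assume "\<epsilon> = -1 \<and> k \<noteq> 0"
    then show ?thesis by (simp add: add_nonneg_nonneg)
  next
    assume h1: "\<epsilon> = 1 \<and> 0 < \<bar>k\<bar> \<and> \<bar>k\<bar> \<le> 1/2"
    have "\<bar>k\<bar>\<^sup>2 \<le> (1/2)\<^sup>2" using h1 by (intro power_mono) auto
    then have "k\<^sup>2 \<le> 1/4" by (simp add: power2_eq_square)
    then show ?thesis using h1 by simp
  qed
  show "BS_solution a b (\<lambda>t x. x / b * (c1 + (\<epsilon> + a\<^sup>2/4) * t - a/2 * ln x
                + 1/(2*k) * (\<delta> * sqrt (1 - 4*\<epsilon>*k\<^sup>2) - 1) * (1/k * t + ln x)))"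
    using s5[OF assms(1,2,4) k0 nn] .
qed

end
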